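(* For every positive integer $r$, with $m=2^r$, the matrix $S_r$ is the incidence matrix of a $2$-$(m,m/2,m/2-1)$ block design; that is, the collection of blocks $\mathcal{J}_b=\{a:(S_r)_{a,b}=1\}$, $b=1,\dots,2^{r+1}-2$, is a $2$-$(m,m/2,m/2-1)$ block design on $\{1,\dots,m\}$.
   Context: Define $\{0,1\}$-matrices $S_r$ recursively. Let $S_1=I_2$. For $r\ge1$ let $F_r=I_{2^r-1}\otimes\begin{pmatrix}0&1\\1&0\end{pmatrix}$, and let $1_r$, $0_r$ denote the $2^r\times1$ all-ones and all-zeros column vectors. For $r\ge2$ set $S_r=\big(B_r^{(i)}\ B_r^{(ii)}\ B_r^{(iii)}\big)$ (horizontal concatenation) with $$B_r^{(i)}=\begin{pmatrix}1_{r-1}&0_{r-1}\\0_{r-1}&1_{r-1}\end{pmatrix},\quad B_r^{(ii)}=\begin{pmatrix}S_{r-1}\\S_{r-1}\end{pmatrix},\quad B_r^{(iii)}=\begin{pmatrix}S_{r-1}\\S_{r-1}F_{r-1}\end{pmatrix}.$$ $S_r$ is a $2^r\times(2^{r+1}-2)$ matrix. A $2$-$(m,l,\lambda)$ block design is a collection of $l$-element subsets (blocks) of $\{1,\dots,m\}$ such that every $2$-element subset of $\{1,\dots,m\}$ is contained in exactly $\lambda$ blocks; the incidence matrix of a sequence of subsets $\mathcal{J}_1,\dots,\mathcal{J}_n$ is the $m\times n$ matrix with $(a,b)$-entry $1$ if $a\in\mathcal{J}_b$ and $0$ otherwise. *)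

theory Defs
  imports Main
begin

text \<open>Matrices are represented as functions nat => nat => nat with 0-based
  row and column indices; the dimensions are tracked explicitly.\<close>

definition idm :: "nat \<Rightarrow> nat \<Rightarrow> nat \<Rightarrow> nat" where
  "idm n = (\<lambda>i j. if i = j \<and> i < n then 1 else 0)"

definition swap2 :: "nat \<Rightarrow> nat \<Rightarrow> nat" where
  "swap2 = (\<lambda>i j. if i < 2 \<and> j < 2 \<and> i \<noteq> j then 1 else 0)"

definition kron :: "(nat \<Rightarrow> nat \<Rightarrow> nat) \<Rightarrow> (nat \<Rightarrow> nat \<Rightarrow> nat) \<Rightarrow> nat \<Rightarrow> nat
    \<Rightarrow> nat \<Rightarrow> nat \<Rightarrow> nat" where
  "kron A B s t = (\<lambda>i j. A (i div s) (j div t) * B (i mod s) (j mod t))"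

definition matmul :: "(nat \<Rightarrow> nat \<Rightarrow> nat) \<Rightarrow> (nat \<Rightarrow> nat \<Rightarrow> nat) \<Rightarrow> nat
    \<Rightarrow> nat \<Rightarrow> nat \<Rightarrow> nat" where
  "matmul A B k = (\<lambda>i j. \<Sum>l<k. A i l * B l j)"

definition Fm :: "nat \<Rightarrow> nat \<Rightarrow> nat \<Rightarrow> nat" where
  "Fm r = kron (idm (2^r - 1)) swap2 2 2"

text \<open>S_r for r >= 1 (S 0 is a dummy value). For r >= 2, with n = 2^(r-1)
  and c = 2^r - 2 the number of columns of S_{r-1}:
  columns 0,1 form B(i), columns 2..c+1 form B(ii), the rest form B(iii).\<close>
fun S :: "nat \<Rightarrow> nat \<Rightarrow> nat \<Rightarrow> nat" where
  "S 0 = (\<lambda>i j. 0)"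
| "S (Suc 0) = idm 2"
| "S (Suc (Suc q)) = (\<lambda>a b.
     (let n = 2 ^ Suc q; c = 2 ^ Suc (Suc q) - 2 in
      if b = 0 then (if a < n then 1 else 0)
      else if b = 1 then (if a < n then 0 else 1)
      else if b < 2 + c then
        (if a < n then S (Suc q) a (b - 2) else S (Suc q) (a - n) (b - 2))
      else
        (if a < n then S (Suc q) a (b - 2 - c)
         else matmul (S (Suc q)) (Fm (Suc q)) c (a - n) (b - 2 - c))))"

text \<open>A 2-(m,l,lambda) design given by the sequence of blocks J_1..J_nb
  (counted with multiplicity) on the point set {1..m}.\<close>
definition is_2_design :: "nat \<Rightarrow> nat \<Rightarrow> nat \<Rightarrow> (nat \<Rightarrow> nat set) \<Rightarrow> nat \<Rightarrow> bool" where
  "is_2_design m l lam J nb \<longleftrightarrow>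
     (\<forall>b\<in>{1..nb}. J b \<subseteq> {1..m} \<and> card (J b) = l) \<and>
     (\<forall>x\<in>{1..m}. \<forall>y\<in>{1..m}. x \<noteq> y \<longrightarrow>
        card {b\<in>{1..nb}. {x, y} \<subseteq> J b} = lam)"

end

theory Submission
  imports Defs
begin

definition sw :: "nat \<Rightarrow> nat" where "sw j = (if even j then Suc j else j - 1)"

lemma pair_sum: "(\<Sum>b<2*(K::nat). f b) = (\<Sum>k<K. f (2*k) + f (2*k+1))"
  by (induction K) (simp_all add: algebra_simps)

lemma sum_split: "(\<Sum>b<(a::nat)+k. f b) = (\<Sum>b<a. f b) + (\<Sum>j<k. f (a+j))"
  by (induction k) (simp_all add: add.assoc)

lemma sw_even[simp]: "sw (2*k) = 2*k+1" by (simp add: sw_def)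
lemma sw_odd[simp]: "sw (Suc (2*k)) = 2*k" by (simp add: sw_def)
lemma sw_0[simp]: "sw 0 = 1" by (simp add: sw_def)
lemma sw_1[simp]: "sw 1 = 0" by (simp add: sw_def)

lemma sw_sum: "(\<Sum>j<2*K. f (sw j)) = (\<Sum>j<2*K. f j)"
  by (simp add: pair_sum add.commute)

lemma sw_lt: "j < 2*K \<Longrightarrow> sw j < 2*K"
  unfolding sw_def by presburger

lemma sw_sw[simp]: "sw (sw j) = j"
  unfolding sw_def by presburger

lemma sw_add_even: "even c \<Longrightarrow> sw (c + j) = c + sw j"
  unfolding sw_def by presburger

lemma matmul_kron:
  assumes "j < 2*K"
  shows "matmul A (kron (idm K) swap2 2 2) (2*K) a j = A a (sw j)"
proof -
  have e: "kron (idm K) swap2 2 2 l j = (if l = sw j then 1 else 0)" if "l < 2*K" for l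
  proof -
    have "l = sw j \<longleftrightarrow> (l div 2 = j div 2 \<and> l mod 2 \<noteq> j mod 2)"
    proof -
      obtain k where "j = 2*k \<or> j = 2*k+1" by (metis evenE oddE)
      then show ?thesis by (auto simp: sw_def) presburger+
    qed
    moreover have "l div 2 < K" using that by linarith
    ultimately show ?thesis
      unfolding kron_def idm_def swap2_def by auto
  qed
  have "matmul A (kron (idm K) swap2 2 2) (2*K) a j = (\<Sum>l<2*K. if l = sw j then A a l else 0)"
    unfolding matmul_def by (rule sum.cong) (auto simp: e)
  also have "\<dots> = A a (sw j)" using sw_lt[OF assms] by simp
  finally show ?thesis .
qed

lemma matmulS:
  assumes "j < 2^Suc (Suc q) - 2"
  shows "matmul (S (Suc q)) (Fm (Suc q)) (2^Suc (Suc q) - 2) a j = S (Suc q) a (sw j)"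
proof -
  have c: "(2::nat)^Suc (Suc q) - 2 = 2 * (2^Suc q - 1)" by (simp add: diff_mult_distrib2)
  show ?thesis using matmul_kron[of j "2^Suc q - 1" "S (Suc q)" a] assms
    unfolding Fm_def c by simp
qed

context
  fixes q n c :: nat
  assumes n: "n = 2^Suc q" and c: "c = 2*n - 2"
begin

lemma c2: "2^Suc (Suc q) - 2 = c" using n c by simp

lemma U0t: "a < n \<Longrightarrow> S (Suc (Suc q)) a 0 = 1" using n by simp
lemma U0b: "S (Suc (Suc q)) (n+a) 0 = 0" using n by simp
lemma U1t: "a < n \<Longrightarrow> S (Suc (Suc q)) a 1 = 0" using n by simp
lemma U1b: "S (Suc (Suc q)) (n+a) 1 = 1" using n by simp
lemma U2t: "a < n \<Longrightarrow> j < c \<Longrightarrow> S (Suc (Suc q)) a (2+j) = S (Suc q) a j"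
  using n c2 by (simp add: Let_def)
lemma U2b: "j < c \<Longrightarrow> S (Suc (Suc q)) (n+a) (2+j) = S (Suc q) a j"
  using n c2 by (simp add: Let_def)
lemma U3t: "a < n \<Longrightarrow> S (Suc (Suc q)) a (2+c+j) = S (Suc q) a j"
  using n c2 by (simp add: Let_def)
lemma U3b: "j < c \<Longrightarrow> S (Suc (Suc q)) (n+a) (2+c+j) = S (Suc q) a (sw j)"
  using n c2 matmulS[of j q a] by (simp add: Let_def)

end


declare S.simps(3)[simp del]

lemma sw_Suc0[simp]: "sw (Suc 0) = 0" by (simp add: sw_def)

definition inv :: "nat \<Rightarrow> bool" where
  "inv r \<longleftrightarrow>
    (\<forall>a<2^r. \<forall>b<2*2^r-2. S r a b + S r a (sw b) = 1) \<and>
    (\<forall>b<2*2^r-2. (\<Sum>a<2^r. S r a b) = 2^r div 2) \<and>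
    (\<forall>x<2^r. \<forall>y<2^r. x \<noteq> y \<longrightarrow> (\<Sum>b<2*2^r-2. S r x b * S r y b) = 2^r div 2 - 1)"

lemma inv1: "inv 1"
proof -
  have l2: "{..<2::nat} = {0,1}" by auto
  show ?thesis unfolding inv_def
    by (auto simp: l2 idm_def sw_def less_2_cases_iff)
qed

lemma rows_cases:
  assumes "(a::nat) < 2*n" "a < n \<Longrightarrow> P" "\<And>a'. a = n + a' \<Longrightarrow> a' < n \<Longrightarrow> P"
  shows P
  using assms(1,2) assms(3)[of "a - n"] by (cases "a < n") auto

lemma cols_cases:
  assumes "(b::nat) < 2+c+c" "b = 0 \<Longrightarrow> P" "b = 1 \<Longrightarrow> P"
    "\<And>j. b = 2 + j \<Longrightarrow> j < c \<Longrightarrow> P" "\<And>j. b = 2 + c + j \<Longrightarrow> j < c \<Longrightarrow> P"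
  shows P
proof -
  consider "b = 0" | "b = 1" | "2 \<le> b \<and> b < 2 + c" | "2 + c \<le> b" by linarith
  then show ?thesis
  proof cases
    case 3 then show ?thesis using assms(4)[of "b-2"] by auto
  next
    case 4 then show ?thesis using assms(1) assms(5)[of "b-2-c"] by auto
  qed (use assms in auto)
qed

lemma sumU: "(\<Sum>b<2+c+c. (f::nat\<Rightarrow>nat) b) = f 0 + f 1 + (\<Sum>j<c. f (2+j)) + (\<Sum>j<c. f (2+c+j))"
proof -
  have l2: "{..<2::nat} = {0,1}" by auto
  show ?thesis using sum_split[of f "2+c" c] sum_split[of f 2 c] by (simp add: l2)
qed

lemma rowsum: "(\<Sum>a<2*n. (f::nat\<Rightarrow>nat) a) = (\<Sum>a<n. f a) + (\<Sum>a<n. f (n+a))"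
  using sum_split[of f n n] by (simp add: mult_2)

lemma inv_step:
  assumes IH: "inv (Suc q)"
  shows "inv (Suc (Suc q))"
proof -
  define n where "n = (2::nat)^Suc q"
  define c where "c = 2*n - 2"
  define K where "K = n - 1"
  let ?T = "S (Suc q)"
  let ?U = "S (Suc (Suc q))"
  have n2: "n \<ge> 2" unfolding n_def using one_le_power[of "2::nat" q] by simp
  have ne: "even n" unfolding n_def by simp
  have nh[simp]: "n div 2 + n div 2 = n" using ne by (auto elim: evenE)
  have cK: "c = 2*K" unfolding c_def K_def by simp
  have ce: "even c" using cK by simp
  have m2: "(2::nat)^Suc (Suc q) = 2*n" unfolding n_def by simp
  have c2: "2*(2*n) - 2 = 2 + c + c" unfolding c_def using n2 by simp
  note nc = n_def c_def
  have nn: "n = 2*2^q" unfolding n_def by simp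
  note Us0 = U0t[OF nc] U0b[OF nc] U1t[OF nc] U1b[OF nc] U2t[OF nc] U2b[OF nc] U3t[OF nc] U3b[OF nc]
  note Us = Us0 Us0[simplified]
  have T2: "?T a j + ?T a (sw j) = 1" if "a < n" "j < c" for a j
    using IH that unfolding inv_def n_def c_def by simp
  have T3: "(\<Sum>a<n. ?T a j) = n div 2" if "j < c" for j
    using IH that unfolding inv_def n_def c_def by simp
  have T4: "(\<Sum>j<c. ?T x j * ?T y j) = n div 2 - 1" if "x < n" "y < n" "x \<noteq> y" for x y
    using IH that unfolding inv_def n_def c_def by simp
  have swc: "sw j < c" if "j < c" for j using sw_lt[of j K] that cK by simp
  have Trep: "(\<Sum>j<c. ?T x j) = K" if "x < n" for x
  proof -
    have "(\<Sum>j<c. ?T x j) = (\<Sum>k<K. ?T x (2*k) + ?T x (2*k+1))" unfolding cK by (rule pair_sum)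
    also have "\<dots> = (\<Sum>k<K. 1)"
    proof (rule sum.cong)
      fix k assume "k \<in> {..<K}"
      then have "2*k < c" using cK by simp
      then show "?T x (2*k) + ?T x (2*k+1) = 1" using T2[OF that, of "2*k"] by simp
    qed simp
    finally show ?thesis by simp
  qed
  have Tsw: "(\<Sum>j<c. f (sw j)) = (\<Sum>j<c. f j)" for f :: "nat \<Rightarrow> nat"
    unfolding cK by (rule sw_sum)
  have P2: "?U a b + ?U a (sw b) = 1" if "a < 2*n" "b < 2+c+c" for a b
    using that(2)
  proof (rule cols_cases)
    assume b: "b = 0" show ?thesis using that(1) by (rule rows_cases) (auto simp: Us b)
  next
    assume b: "b = 1" show ?thesis using that(1) by (rule rows_cases) (auto simp: Us b)
  next
    fix j assume b: "b = 2 + j" "j < c"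
    have s: "sw b = 2 + sw j" using b sw_add_even[of 2 j] by simp
    show ?thesis unfolding s unfolding b(1) using that(1) by (rule rows_cases) (auto simp: Us b(2) swc T2)
  next
    fix j assume b: "b = 2 + c + j" "j < c"
    have s: "sw b = 2 + c + sw j" using b sw_add_even[of "2+c" j] ce by simp
    have aux: "?T a' (sw j) + ?T a' j = 1" if "a' < n" for a'
      using T2[OF that swc[OF b(2)]] by simp
    show ?thesis unfolding s unfolding b(1) using that(1) by (rule rows_cases) (auto simp: Us b(2) swc T2 aux)
  qed
  have P3: "(\<Sum>a<2*n. ?U a b) = (2*n) div 2" if "b < 2+c+c" for b
    using that
  proof (rule cols_cases)
    assume b: "b = 0"
    have "(\<Sum>a<n. ?U a b) = (\<Sum>a<n. 1)" by (rule sum.cong) (auto simp: b Us)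
    then show ?thesis by (simp add: rowsum b Us)
  next
    assume b: "b = 1"
    have "(\<Sum>a<n. ?U a b) = (\<Sum>a<n. 0)" by (rule sum.cong) (auto simp: b Us)
    then show ?thesis by (simp add: rowsum b Us)
  next
    fix j assume b: "b = 2 + j" "j < c"
    have "(\<Sum>a<n. ?U a b) = (\<Sum>a<n. ?T a j)" by (rule sum.cong) (auto simp: b Us)
    then show ?thesis using T3[OF b(2)] ne by (simp add: rowsum b Us)
  next
    fix j assume b: "b = 2 + c + j" "j < c"
    have "(\<Sum>a<n. ?U a b) = (\<Sum>a<n. ?T a j)" by (rule sum.cong) (auto simp: b Us)
    then show ?thesis using T3[OF b(2)] T3[OF swc[OF b(2)]] ne by (simp add: rowsum b Us)
  qed
  have mix: "(\<Sum>b<2+c+c. ?U x b * ?U (n+y) b) = n - 1" if "x < n" "y < n" for x y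
  proof -
    have "(\<Sum>b<2+c+c. ?U x b * ?U (n+y) b) =
        (\<Sum>j<c. ?T x j * ?T y j) + (\<Sum>j<c. ?T x j * ?T y (sw j))"
      using that unfolding sumU by (simp add: Us)
    also have "\<dots> = (\<Sum>j<c. ?T x j * (?T y j + ?T y (sw j)))"
      by (simp add: sum.distrib[symmetric] distrib_left)
    also have "\<dots> = (\<Sum>j<c. ?T x j)"
      by (rule sum.cong) (auto simp: T2 that)
    finally show ?thesis using Trep[OF that(1)] K_def by simp
  qed
  have P4: "(\<Sum>b<2+c+c. ?U x b * ?U y b) = (2*n) div 2 - 1" if "x < 2*n" "y < 2*n" "x \<noteq> y" for x y
    using that(1)
  proof (rule rows_cases)
    assume x: "x < n"
    show ?thesis using that(2)
    proof (rule rows_cases)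
      assume y: "y < n"
      have "(\<Sum>b<2+c+c. ?U x b * ?U y b) = 1 + (\<Sum>j<c. ?T x j * ?T y j) + (\<Sum>j<c. ?T x j * ?T y j)"
        using x y unfolding sumU by (simp add: Us)
      then show ?thesis using T4[OF x y that(3)] ne n2 by simp
    next
      fix y' assume y: "y = n + y'" "y' < n"
      show ?thesis using mix[OF x y(2)] y by simp
    qed
  next
    fix x' assume x: "x = n + x'" "x' < n"
    show ?thesis using that(2)
    proof (rule rows_cases)
      assume y: "y < n"
      have "(\<Sum>b<2+c+c. ?U x b * ?U y b) = (\<Sum>b<2+c+c. ?U y b * ?U (n+x') b)"
        using x by (simp add: mult.commute)
      then show ?thesis using mix[OF y x(2)] by simp
    next
      fix y' assume y: "y = n + y'" "y' < n"
      have "x' \<noteq> y'" using x y that(3) by simp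
      have "(\<Sum>b<2+c+c. ?U x b * ?U y b) = 1 + (\<Sum>j<c. ?T x' j * ?T y' j) + (\<Sum>j<c. ?T x' (sw j) * ?T y' (sw j))"
        using x y unfolding sumU by (simp add: Us)
      also have "\<dots> = 1 + (\<Sum>j<c. ?T x' j * ?T y' j) + (\<Sum>j<c. ?T x' j * ?T y' j)"
        using Tsw[of "\<lambda>j. ?T x' j * ?T y' j"] by simp
      finally show ?thesis using T4[OF x(2) y(2) \<open>x' \<noteq> y'\<close>] ne n2 by simp
    qed
  qed
  show ?thesis unfolding inv_def m2 c2 using P2 P3 P4 by blast
qed


lemma inv_all: "r \<ge> 1 \<Longrightarrow> inv r"
proof (induction r rule: nat_induct_at_least)
  case base then show ?case by (rule inv1)
next
  case (Suc r)
  then obtain q where "r = Suc q" by (cases r) auto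
  then show ?case using inv_step Suc by simp
qed

lemma shift_set: "{a\<in>{1..m}. P (a - 1)} = Suc ` {a\<in>{..<m}. P a}"
proof -
  have "{1..m} = Suc ` {..<m}" by (simp add: image_Suc_lessThan)
  then show ?thesis by auto
qed

lemma card_sum:
  assumes "finite A" "\<forall>a\<in>A. (f::'a\<Rightarrow>nat) a \<le> 1"
  shows "card {a\<in>A. f a = 1} = sum f A"
proof -
  have "card {a\<in>A. f a = 1} = (\<Sum>a\<in>{a\<in>A. f a = 1}. 1::nat)" by simp
  also have "\<dots> = (\<Sum>a\<in>A. if f a = 1 then 1 else 0)"
    by (rule sum.inter_filter[OF assms(1)])
  also have "\<dots> = sum f A"
    by (rule sum.cong) (use assms(2) in \<open>auto simp: le_Suc_eq\<close>)
  finally show ?thesis .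
qed

theorem proposition4p4:
  fixes r :: nat
  assumes "r \<ge> 1"
  defines "m \<equiv> 2 ^ r"
  shows "(\<forall>a<m. \<forall>b<2 ^ (r + 1) - 2. S r a b \<in> {0, 1}) \<and>
         is_2_design m (m div 2) (m div 2 - 1)
           (\<lambda>b. {a\<in>{1..m}. S r (a - 1) (b - 1) = 1}) (2 ^ (r + 1) - 2)"
proof -
  have I: "inv r" using assms(1) by (rule inv_all)
  define c where "c = (2::nat) ^ (r + 1) - 2"
  have cc: "2*2^r - 2 = c" unfolding c_def by simp
  have P2: "S r a b + S r a (sw b) = 1" if "a < m" "b < c" for a b
    using I that unfolding inv_def m_def cc by simp
  have le1: "S r a b \<le> 1" if "a < m" "b < c" for a b using P2[OF that] by linarith
  have P3: "(\<Sum>a<m. S r a b) = m div 2" if "b < c" for b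
    using I that unfolding inv_def m_def cc by simp
  have P4: "(\<Sum>b<c. S r x b * S r y b) = m div 2 - 1" if "x < m" "y < m" "x \<noteq> y" for x y
    using I that unfolding inv_def m_def cc by simp
  have part1: "\<forall>a<m. \<forall>b<c. S r a b \<in> {0, 1}"
    using le1 by (auto simp: le_Suc_eq)
  have blocks: "card {a\<in>{1..m}. S r (a - 1) (b - 1) = 1} = m div 2" if "b \<in> {1..c}" for b
  proof -
    have "{a\<in>{1..m}. S r (a - 1) (b - 1) = 1} = Suc ` {a\<in>{..<m}. S r a (b - 1) = 1}"
      by (rule shift_set)
    then have "card {a\<in>{1..m}. S r (a - 1) (b - 1) = 1} = card {a\<in>{..<m}. S r a (b - 1) = 1}"
      by (simp add: card_image)
    also have "\<dots> = (\<Sum>a<m. S r a (b - 1))"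
      using that le1 by (intro card_sum) auto
    moreover have "b - 1 < c" using that by auto
    ultimately show ?thesis using P3[of "b - 1"] by simp
  qed
  have pairs: "card {b\<in>{1..c}. {x, y} \<subseteq> {a\<in>{1..m}. S r (a - 1) (b - 1) = 1}} = m div 2 - 1"
    if "x \<in> {1..m}" "y \<in> {1..m}" "x \<noteq> y" for x y
  proof -
    have "{b\<in>{1..c}. {x, y} \<subseteq> {a\<in>{1..m}. S r (a - 1) (b - 1) = 1}}
        = Suc ` {b\<in>{..<c}. S r (x - 1) b * S r (y - 1) b = 1}"
    proof -
      have "{b\<in>{1..c}. {x, y} \<subseteq> {a\<in>{1..m}. S r (a - 1) (b - 1) = 1}}
          = {b\<in>{1..c}. S r (x - 1) (b - 1) * S r (y - 1) (b - 1) = 1}"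
        using that by auto
      then show ?thesis using shift_set[of c "\<lambda>b. S r (x - 1) b * S r (y - 1) b = 1"] by simp
    qed
    then have "card {b\<in>{1..c}. {x, y} \<subseteq> {a\<in>{1..m}. S r (a - 1) (b - 1) = 1}}
        = card {b\<in>{..<c}. S r (x - 1) b * S r (y - 1) b = 1}"
      by (simp add: card_image)
    also have "\<dots> = (\<Sum>b<c. S r (x - 1) b * S r (y - 1) b)"
    proof (rule card_sum)
      show "\<forall>b\<in>{..<c}. S r (x - 1) b * S r (y - 1) b \<le> 1"
      proof
        fix b assume b: "b \<in> {..<c}"
        have "x - 1 < m" "y - 1 < m" using that by auto
        then have "S r (x - 1) b \<le> 1" "S r (y - 1) b \<le> 1" using le1 b by auto
        then show "S r (x - 1) b * S r (y - 1) b \<le> 1" by (metis mult_le_mono mult_1)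
      qed
    qed simp
    finally show ?thesis using P4[of "x - 1" "y - 1"] that by auto
  qed
  show ?thesis
    unfolding is_2_design_def c_def[symmetric]
    using part1 blocks pairs by auto
qed

end
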